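(* Let $S_n=(E_{n-m},K_m)$ be a word-representable split graph with $m\geq 3$, and let $d$ be an integer with $2\leq d\leq \frac{m+1}{2}$. Then $E_{n-m}$ contains at most $m$ vertices of degree $d$ having pairwise distinct neighbourhoods. Moreover, this bound is achievable: for every such $m$ and $d$ there is a word-representable split graph $(E_{n-m},K_m)$ whose independent set contains $m$ vertices of degree $d$ with pairwise distinct neighbourhoods.
   Context: A graph $G=(V,E)$ is word-representable if there exists a word $w$ over the alphabet $V$ such that for all distinct $x,y\in V$, the letters $x$ and $y$ alternate in $w$ if and only if $xy\in E$ (alternation meaning that deleting all letters other than $x$ and $y$ leaves $xyxy\cdots$ or $yxyx\cdots$). The notation $S_n=(E_{n-m},K_m)$ denotes a split graph on $n$ vertices whose vertex set is partitioned into a maximal clique $K_m$ on $m$ vertices and an independent set $E_{n-m}$ on $n-m$ vertices. *)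

theory Defs
  imports Main
begin

definition simple_graph :: "'a set \<Rightarrow> ('a \<Rightarrow> 'a \<Rightarrow> bool) \<Rightarrow> bool" where
  "simple_graph V Adj \<longleftrightarrow> finite V \<and> (\<forall>x y. Adj x y \<longrightarrow> Adj y x)
     \<and> (\<forall>x. \<not> Adj x x) \<and> (\<forall>x y. Adj x y \<longrightarrow> x \<in> V \<and> y \<in> V)"

definition neighbourhood :: "'a set \<Rightarrow> ('a \<Rightarrow> 'a \<Rightarrow> bool) \<Rightarrow> 'a \<Rightarrow> 'a set" where
  "neighbourhood V Adj x = {y \<in> V. Adj x y}"

definition degree :: "'a set \<Rightarrow> ('a \<Rightarrow> 'a \<Rightarrow> bool) \<Rightarrow> 'a \<Rightarrow> nat" where
  "degree V Adj x = card (neighbourhood V Adj x)"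

definition alternate :: "'a list \<Rightarrow> 'a \<Rightarrow> 'a \<Rightarrow> bool" where
  "alternate w x y \<longleftrightarrow>
     (let u = filter (\<lambda>z. z = x \<or> z = y) w in
       (\<forall>i < length u. u ! i = (if even i then x else y)) \<or>
       (\<forall>i < length u. u ! i = (if even i then y else x)))"

definition word_representable :: "'a set \<Rightarrow> ('a \<Rightarrow> 'a \<Rightarrow> bool) \<Rightarrow> bool" where
  "word_representable V Adj \<longleftrightarrow>
     (\<exists>w. set w = V \<and> (\<forall>x\<in>V. \<forall>y\<in>V. x \<noteq> y \<longrightarrow> (alternate w x y \<longleftrightarrow> Adj x y)))"

definition is_clique :: "('a \<Rightarrow> 'a \<Rightarrow> bool) \<Rightarrow> 'a set \<Rightarrow> bool" where
  "is_clique Adj K \<longleftrightarrow> (\<forall>x\<in>K. \<forall>y\<in>K. x \<noteq> y \<longrightarrow> Adj x y)"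

definition maximal_clique :: "'a set \<Rightarrow> ('a \<Rightarrow> 'a \<Rightarrow> bool) \<Rightarrow> 'a set \<Rightarrow> bool" where
  "maximal_clique V Adj K \<longleftrightarrow> K \<subseteq> V \<and> is_clique Adj K \<and>
     (\<forall>v \<in> V - K. \<not> is_clique Adj (insert v K))"

definition independent_set :: "('a \<Rightarrow> 'a \<Rightarrow> bool) \<Rightarrow> 'a set \<Rightarrow> bool" where
  "independent_set Adj I \<longleftrightarrow> (\<forall>x\<in>I. \<forall>y\<in>I. \<not> Adj x y)"

definition split_graph :: "'a set \<Rightarrow> ('a \<Rightarrow> 'a \<Rightarrow> bool) \<Rightarrow> 'a set \<Rightarrow> 'a set \<Rightarrow> bool" where
  "split_graph V Adj I K \<longleftrightarrow> simple_graph V Adj \<and> I \<inter> K = {} \<and> I \<union> K = V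
     \<and> maximal_clique V Adj K \<and> independent_set Adj I"

end

theory Submission
  imports Defs
begin

definition cnt :: "'a list \<Rightarrow> 'a \<Rightarrow> nat \<Rightarrow> nat" where
  "cnt w x n = count_list (take n w) x"

lemma cnt_Suc: "n < length w \<Longrightarrow> cnt w x (Suc n) = cnt w x n + (if w!n = x then 1 else 0)"
  by (simp add: cnt_def take_Suc_conv_app_nth)

lemma cnt_mono: assumes "n \<le> n'" shows "cnt w x n \<le> cnt w x n'"
proof -
  have "take n' w = take n w @ drop n (take n' w)"
    using assms by (metis append_take_drop_id min.absorb1 take_take)
  then have "count_list (take n' w) x = count_list (take n w) x + count_list (drop n (take n' w)) x"
    by (metis count_list_append)
  then show ?thesis by (simp add: cnt_def)
qed

lemma cnt_const:
  assumes "\<forall>k. a \<le> k \<and> k < b \<longrightarrow> w!k \<noteq> x" "a \<le> b" "b \<le> length w"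
  shows "cnt w x b = cnt w x a"
  using assms
proof (induction b)
  case 0
  then show ?case by simp
next
  case (Suc b)
  show ?case
  proof (cases "a = Suc b")
    case True
    then show ?thesis by simp
  next
    case False
    then have "a \<le> b" using Suc.prems by simp
    then have "cnt w x b = cnt w x a" using Suc by auto
    moreover have "w!b \<noteq> x" using Suc.prems \<open>a \<le> b\<close> by auto
    ultimately show ?thesis using cnt_Suc[of b w x] Suc.prems by simp
  qed
qed

definition lead :: "'a list \<Rightarrow> 'a \<Rightarrow> 'a \<Rightarrow> bool" where
  "lead w x y \<longleftrightarrow> (\<forall>n \<le> length w. cnt w y n \<le> cnt w x n \<and> cnt w x n \<le> cnt w y n + 1)"

lemma len_filter2: "x \<noteq> y \<Longrightarrow> length (filter (\<lambda>z. z = x \<or> z = y) w) = count_list w x + count_list w y"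
  by (induction w) auto

lemma filter_swap: "filter (\<lambda>z. z = y \<or> z = x) w = filter (\<lambda>z. z = x \<or> z = y) w"
  by (induction w) auto

definition alt1 :: "'a list \<Rightarrow> 'a \<Rightarrow> 'a \<Rightarrow> bool" where
  "alt1 w x y \<longleftrightarrow> (\<forall>i<length (filter (\<lambda>z. z = x \<or> z = y) w).
      filter (\<lambda>z. z = x \<or> z = y) w ! i = (if even i then x else y))"

lemma lead_snoc:
  "lead (w@[a]) x y \<longleftrightarrow> lead w x y \<and> count_list (w@[a]) y \<le> count_list (w@[a]) x
      \<and> count_list (w@[a]) x \<le> count_list (w@[a]) y + 1"
proof -
  have A: "cnt (w@[a]) z n = cnt w z n" if "n \<le> length w" for z n
    using that by (simp add: cnt_def)
  have B: "cnt (w@[a]) z (Suc (length w)) = count_list (w@[a]) z" for z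
    by (simp add: cnt_def)
  have "(\<forall>n \<le> Suc (length w). P n) \<longleftrightarrow> (\<forall>n \<le> length w. P n) \<and> P (Suc (length w))" for P
    using le_Suc_eq by auto
  then show ?thesis
    unfolding lead_def by (simp add: A B)
qed

lemma alt1_snoc:
  "alt1 (w@[a]) x y \<longleftrightarrow> alt1 w x y \<and> ((a = x \<or> a = y) \<longrightarrow>
      a = (if even (length (filter (\<lambda>z. z = x \<or> z = y) w)) then x else y))"
proof (cases "a = x \<or> a = y")
  case True
  let ?u = "filter (\<lambda>z. z = x \<or> z = y) w"
  have f: "filter (\<lambda>z. z = x \<or> z = y) (w@[a]) = ?u @ [a]" using True by simp
  have "(\<forall>i<length (?u@[a]). (?u@[a]) ! i = (if even i then x else y)) \<longleftrightarrow>
        (\<forall>i<length ?u. ?u ! i = (if even i then x else y)) \<and> a = (if even (length ?u) then x else y)"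
    by (auto simp: nth_append less_Suc_eq)
  then show ?thesis unfolding alt1_def f using True by simp
next
  case False
  then show ?thesis unfolding alt1_def by simp
qed

lemma alt1_iff_lead: "x \<noteq> y \<Longrightarrow> alt1 w x y \<longleftrightarrow> lead w x y"
proof (induction w rule: rev_induct)
  case Nil
  then show ?case by (simp add: alt1_def lead_def cnt_def)
next
  case (snoc a w)
  let ?u = "filter (\<lambda>z. z = x \<or> z = y) w"
  have len: "length ?u = count_list w x + count_list w y"
    using len_filter2[OF snoc.prems] .
  show ?case
  proof (cases "lead w x y")
    case False
    then have "\<not> alt1 w x y" using snoc by blast
    then show ?thesis using False by (simp add: alt1_snoc lead_snoc)
  next
    case True
    then have b: "count_list w y \<le> count_list w x \<and> count_list w x \<le> count_list w y + 1"
      unfolding lead_def cnt_def by (metis order_refl take_all)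
    have "alt1 w x y" using True snoc by blast
    have c: "count_list w x = count_list w y \<or> count_list w x = Suc (count_list w y)"
      using b by linarith
    then show ?thesis
    proof
      assume e: "count_list w x = count_list w y"
      show ?thesis using True \<open>alt1 w x y\<close> len snoc.prems e
        by (auto simp: alt1_snoc lead_snoc)
    next
      assume e: "count_list w x = Suc (count_list w y)"
      show ?thesis using True \<open>alt1 w x y\<close> len snoc.prems e
        by (auto simp: alt1_snoc lead_snoc)
    qed
  qed
qed

lemma alternate_iff_lead: "x \<noteq> y \<Longrightarrow> alternate w x y \<longleftrightarrow> lead w x y \<or> lead w y x"
proof -
  assume xy: "x \<noteq> y"
  have "alternate w x y \<longleftrightarrow> alt1 w x y \<or> alt1 w y x"
    unfolding alternate_def alt1_def Let_def filter_swap[of y x] by simp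
  then show ?thesis using alt1_iff_lead xy by metis
qed


lemma leadD: "lead w x y \<Longrightarrow> n \<le> length w \<Longrightarrow> cnt w y n \<le> cnt w x n \<and> cnt w x n \<le> cnt w y n + 1"
  unfolding lead_def by blast

definition sepw :: "'a list \<Rightarrow> 'a \<Rightarrow> 'a \<Rightarrow> bool" where
  "sepw w x y \<longleftrightarrow> (\<forall>i j. i < j \<longrightarrow> j < length w \<longrightarrow> w!i = w!j \<longrightarrow> w!i \<in> {x,y} \<longrightarrow>
      (\<exists>k. i < k \<and> k < j \<and> w!k \<in> {x,y} \<and> w!k \<noteq> w!i))"

lemma lead_between:
  assumes L: "lead w A B" and AB: "A \<noteq> B" and ij: "i < j" "j < length w"
    and wi: "w!i = X" and wj: "w!j = X" and XY: "(X = A \<and> Y = B) \<or> (X = B \<and> Y = A)"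
  shows "\<exists>k. i<k \<and> k<j \<and> w!k = Y"
proof (rule ccontr)
  assume "\<not> ?thesis"
  then have nk: "\<forall>k. Suc i \<le> k \<and> k < j \<longrightarrow> w!k \<noteq> Y" by auto
  have XneY: "X \<noteq> Y" using XY AB by auto
  have c1: "cnt w Y j = cnt w Y (Suc i)" using cnt_const[OF nk] ij by simp
  have c2: "cnt w Y (Suc i) = cnt w Y i" using cnt_Suc[of i w Y] ij wi XneY by simp
  have c3: "cnt w Y (Suc j) = cnt w Y j" using cnt_Suc[of j w Y] ij wj XneY by simp
  have c4: "cnt w X (Suc i) = cnt w X i + 1" using cnt_Suc[of i w X] ij wi by simp
  have c5: "cnt w X (Suc j) = cnt w X j + 1" using cnt_Suc[of j w X] ij wj by simp
  have c6: "cnt w X (Suc i) \<le> cnt w X j" using cnt_mono[of "Suc i" j w X] ij by simp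
  have l1: "cnt w B i \<le> cnt w A i \<and> cnt w A i \<le> cnt w B i + 1" using leadD[OF L] ij by simp
  have l2: "cnt w B (Suc j) \<le> cnt w A (Suc j) \<and> cnt w A (Suc j) \<le> cnt w B (Suc j) + 1"
    using leadD[OF L] ij by simp
  from XY show False
  proof
    assume h: "X = A \<and> Y = B"
    then have h1: "X = A" and h2: "Y = B" by auto
    show False using c1 c2 c3 c4 c5 c6 l1 l2 unfolding h1 h2 by linarith
  next
    assume h: "X = B \<and> Y = A"
    then have h1: "X = B" and h2: "Y = A" by auto
    show False using c1 c2 c3 c4 c5 c6 l1 l2 unfolding h1 h2 by linarith
  qed
qed

lemma lead_sepw: assumes xy: "x \<noteq> y" and L: "lead w x y \<or> lead w y x" shows "sepw w x y"
  unfolding sepw_def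
proof (intro allI impI)
  fix i j
  assume ij: "i < j" "j < length w" and e: "w ! i = w ! j" and m: "w ! i \<in> {x, y}"
  show "\<exists>k>i. k < j \<and> w ! k \<in> {x, y} \<and> w ! k \<noteq> w ! i"
  proof (cases "w!i = x")
    case True
    have wx: "w!i = x" "w!j = x" using True e by simp_all
    have "\<exists>k. i<k \<and> k<j \<and> w!k = y"
    proof (cases "lead w x y")
      case True
      then show ?thesis by (rule lead_between[OF _ xy ij wx]) simp
    next
      case False
      then have "lead w y x" using L by blast
      then show ?thesis by (rule lead_between[OF _ xy[symmetric] ij wx]) simp
    qed
    then obtain k where k: "i<k" "k<j" "w!k = y" by blast
    have "w!k \<in> {x,y}" "w!k \<noteq> w!i" using k(3) wx(1) xy by auto
    then show ?thesis using k(1,2) by blast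
  next
    case False
    then have wy: "w!i = y" "w!j = y" using m e by simp_all
    have "\<exists>k. i<k \<and> k<j \<and> w!k = x"
    proof (cases "lead w x y")
      case True
      then show ?thesis by (rule lead_between[OF _ xy ij wy]) simp
    next
      case False
      then have "lead w y x" using L by blast
      then show ?thesis by (rule lead_between[OF _ xy[symmetric] ij wy]) simp
    qed
    then obtain k where k: "i<k" "k<j" "w!k = x" by blast
    have "w!k \<in> {x,y}" "w!k \<noteq> w!i" using k(3) wy(1) xy by auto
    then show ?thesis using k(1,2) by blast
  qed
qed

lemma sepwD: "sepw w x y \<Longrightarrow> i < j \<Longrightarrow> j < length w \<Longrightarrow> w!i = w!j \<Longrightarrow> w!i \<in> {x,y} \<Longrightarrow>
   \<exists>k. i < k \<and> k < j \<and> w!k \<in> {x,y} \<and> w!k \<noteq> w!i"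
  unfolding sepw_def by blast

lemma sep_lead_aux:
  assumes xy: "x \<noteq> y" and S: "sepw w x y" and i0: "i0 < length w" "w!i0 = x"
    and first: "\<forall>i<i0. w!i \<notin> {x,y}"
  shows "lead w x y"
proof -
  define LastL where "LastL z n \<longleftrightarrow> (\<exists>i<n. w!i = z \<and> (\<forall>k. i<k \<and> k<n \<longrightarrow> w!k \<notin> {x,y}))" for z n
  define Inv where "Inv n \<longleftrightarrow> cnt w y n \<le> cnt w x n \<and> cnt w x n \<le> cnt w y n + 1 \<and>
     (cnt w x n = cnt w y n + 1 \<longrightarrow> LastL x n) \<and>
     (cnt w x n = cnt w y n \<longrightarrow> n \<le> i0 \<or> LastL y n)" for n
  have noLast: False if h: "LastL z n" "n < length w" "w!n = z" "z \<in> {x,y}" for z n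
  proof -
    obtain i where i: "i<n" "w!i = z" "\<forall>k. i<k \<and> k<n \<longrightarrow> w!k \<notin> {x,y}"
      using h(1) unfolding LastL_def by blast
    have "w!i = w!n" "w!i \<in> {x,y}" using i h by auto
    from sepwD[OF S i(1) h(2) this] obtain k where "i<k" "k<n" "w!k \<in> {x,y}" by blast
    then show False using i(3) by blast
  qed
  have LastN: "LastL z (Suc n)" if "w!n = z" for z n
    unfolding LastL_def using that by (intro exI[of _ n]) auto
  have LastO: "LastL z (Suc n)" if h: "LastL z n" "w!n \<notin> {x,y}" for z n
  proof -
    obtain i where i: "i<n" "w!i = z" "\<forall>k. i<k \<and> k<n \<longrightarrow> w!k \<notin> {x,y}"
      using h(1) unfolding LastL_def by blast
    have "\<forall>k. i<k \<and> k<Suc n \<longrightarrow> w!k \<notin> {x,y}"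
    proof (intro allI impI)
      fix k assume k: "i<k \<and> k<Suc n"
      show "w!k \<notin> {x,y}"
      proof (cases "k = n")
        case True then show ?thesis using h(2) by simp
      next
        case False then show ?thesis using i k by simp
      qed
    qed
    then show ?thesis unfolding LastL_def using i by (intro exI[of _ i]) simp
  qed
  have "Inv n" if "n \<le> length w" for n
    using that
  proof (induction n)
    case 0
    show ?case by (simp add: Inv_def cnt_def)
  next
    case (Suc n)
    have n: "n < length w" using Suc.prems by simp
    have IH: "Inv n" using Suc by simp
    have I1: "cnt w y n \<le> cnt w x n" "cnt w x n \<le> cnt w y n + 1"
      and I2: "cnt w x n = cnt w y n + 1 \<Longrightarrow> LastL x n"
      and I3: "cnt w x n = cnt w y n \<Longrightarrow> n \<le> i0 \<or> LastL y n"
      using IH unfolding Inv_def by auto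
    have cx: "cnt w x (Suc n) = cnt w x n + (if w!n = x then 1 else 0)" using cnt_Suc[OF n] .
    have cy: "cnt w y (Suc n) = cnt w y n + (if w!n = y then 1 else 0)" using cnt_Suc[OF n] .
    consider (X) "w!n = x" | (Y) "w!n = y" | (O) "w!n \<notin> {x,y}" by auto
    then show ?case
    proof cases
      case X
      have ne: "cnt w x n \<noteq> cnt w y n + 1"
        using I2 noLast[of x n] n X by auto
      then have e: "cnt w x n = cnt w y n" using I1 by simp
      have c: "cnt w x (Suc n) = cnt w x n + 1" "cnt w y (Suc n) = cnt w y n" using cx cy X xy by auto
      show ?thesis unfolding Inv_def c using e LastN[OF X] by simp
    next
      case Y
      have ne: "cnt w x n \<noteq> cnt w y n"
      proof
        assume E: "cnt w x n = cnt w y n"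
        have "n \<ge> i0"
        proof (rule ccontr)
          assume "\<not> n \<ge> i0" then have "n < i0" by simp
          then show False using first Y by auto
        qed
        moreover have "n \<noteq> i0" using Y i0 xy by auto
        ultimately have "LastL y n" using I3[OF E] by simp
        then show False using noLast[of y n] n Y by simp
      qed
      then have e: "cnt w x n = cnt w y n + 1" using I1 by simp
      have c: "cnt w x (Suc n) = cnt w x n" "cnt w y (Suc n) = cnt w y n + 1" using cx cy Y xy by auto
      show ?thesis unfolding Inv_def c using e LastN[OF Y] by simp
    next
      case O
      have c: "cnt w x (Suc n) = cnt w x n" "cnt w y (Suc n) = cnt w y n" using cx cy O by auto
      have B: "Suc n \<le> i0" if "n \<le> i0"
      proof -
        have "n \<noteq> i0" using O i0(2) by auto
        then show ?thesis using that by simp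
      qed
      show ?thesis unfolding Inv_def c using I1 I2 I3 B LastO[OF _ O] by blast
    qed
  qed
  then show ?thesis unfolding lead_def Inv_def by blast
qed

lemma sepw_sym: "sepw w x y \<Longrightarrow> sepw w y x"
  unfolding sepw_def by (simp add: insert_commute)

lemma sepw_lead: assumes xy: "x \<noteq> y" and S: "sepw w x y" shows "lead w x y \<or> lead w y x"
proof (cases "\<exists>i<length w. w!i \<in> {x,y}")
  case False
  then have "x \<notin> set w" "y \<notin> set w" by (auto simp: in_set_conv_nth)
  then have "cnt w x n = 0" "cnt w y n = 0" for n
    unfolding cnt_def by (meson count_notin in_set_takeD)+
  then show ?thesis unfolding lead_def by simp
next
  case True
  define i0 where "i0 = (LEAST i. i<length w \<and> w!i \<in> {x,y})"
  have i0: "i0 < length w" "w!i0 \<in> {x,y}" using LeastI_ex[OF True] unfolding i0_def by auto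
  have first: "\<forall>i<i0. w!i \<notin> {x,y}"
  proof (intro allI impI)
    fix i assume i: "i < i0"
    show "w!i \<notin> {x,y}"
    proof
      assume wi: "w!i \<in> {x,y}"
      have il: "i < length w" using i i0(1) by simp
      have "i0 \<le> i" unfolding i0_def by (rule Least_le) (use il wi in simp)
      then show False using i by simp
    qed
  qed
  show ?thesis
  proof (cases "w!i0 = x")
    case True
    then show ?thesis using sep_lead_aux[OF xy S i0(1) True first] by simp
  next
    case False
    then have "w!i0 = y" using i0 by auto
    moreover have "\<forall>i<i0. w!i \<notin> {y,x}" using first by (simp add: insert_commute)
    ultimately have "lead w y x" using sep_lead_aux[OF xy[symmetric] sepw_sym[OF S] i0(1)] by blast
    then show ?thesis by simp
  qed
qed

lemma alternate_iff_sepw: assumes xy: "x \<noteq> y" shows "alternate w x y \<longleftrightarrow> sepw w x y"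
  using alternate_iff_lead[OF xy] lead_sepw[OF xy] sepw_lead[OF xy] by blast


definition altl :: "'a list \<Rightarrow> 'a \<Rightarrow> 'a \<Rightarrow> bool" where
  "altl w x y \<longleftrightarrow> lead w x y \<or> lead w y x"

lemma lead_eq_at:
  assumes "\<And>n. n \<le> length w \<Longrightarrow> cnt w x n = cnt w y n" "x \<in> set w" "x \<noteq> y"
  shows False
proof -
  obtain i where i: "i < length w" "w!i = x" using assms(2) by (auto simp: in_set_conv_nth)
  have "cnt w x i = cnt w y i" using assms(1) i by simp
  moreover have "cnt w x (Suc i) = cnt w y (Suc i)" using assms(1) i by simp
  ultimately show False using cnt_Suc[OF i(1), of x] cnt_Suc[OF i(1), of y] i assms(3) by simp
qed

lemma lead_antisym: assumes "lead w x y" "lead w y x" "x \<in> set w" "x \<noteq> y" shows False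
proof -
  have "cnt w x n = cnt w y n" if "n \<le> length w" for n
    using leadD[OF assms(1) that] leadD[OF assms(2) that] by simp
  then show False using lead_eq_at assms by metis
qed

lemma lead_cyc: assumes "lead w x y" "lead w y z" "lead w z x" "x \<in> set w" "x \<noteq> y" shows False
proof -
  have "cnt w x n = cnt w y n" if "n \<le> length w" for n
    using leadD[OF assms(1) that] leadD[OF assms(2) that] leadD[OF assms(3) that] by simp
  then show False using lead_eq_at assms by metis
qed

definition orient :: "'a list \<Rightarrow> 'a \<Rightarrow> 'a \<Rightarrow> 'a \<Rightarrow> bool" where
  "orient w p q r \<longleftrightarrow> (lead w p q \<and> lead w q r \<and> lead w p r) \<or>
     (lead w q r \<and> lead w r p \<and> lead w q p) \<or> (lead w r p \<and> lead w p q \<and> lead w r q)"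

lemma orient_rot: "orient w p q r \<Longrightarrow> orient w q r p"
  unfolding orient_def by blast

lemma orient_cases:
  assumes "p \<noteq> q" "q \<noteq> r" "p \<noteq> r" "altl w p q" "altl w q r" "altl w p r"
    "p \<in> set w"
  shows "orient w p q r \<or> orient w p r q"
  using assms lead_cyc[of w p q r] lead_cyc[of w p r q] unfolding orient_def altl_def by blast

lemma orient_excl:
  assumes "orient w p q r" "orient w p r q" "p \<noteq> q" "q \<noteq> r" "p \<noteq> r"
    "p \<in> set w" "q \<in> set w" "r \<in> set w"
  shows False
  using assms lead_antisym[of w p q] lead_antisym[of w q p] lead_antisym[of w q r]
    lead_antisym[of w r q] lead_antisym[of w p r] lead_antisym[of w r p]
  unfolding orient_def by blast

lemma orient_between:
  assumes O: "orient w p q r" and d: "p \<noteq> q" "q \<noteq> r" "p \<noteq> r"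
    and ij: "i < j" "j < length w" and wi: "w!i = p" and wj: "w!j = r"
  shows "\<exists>k. i<k \<and> k<j \<and> w!k = q"
proof (rule ccontr)
  assume "\<not> ?thesis"
  then have nk: "\<forall>k. Suc i \<le> k \<and> k < j \<longrightarrow> w!k \<noteq> q" by auto
  have c0: "cnt w q j = cnt w q (Suc i)" using cnt_const[OF nk] ij by simp
  have c1: "cnt w q (Suc i) = cnt w q i" "cnt w r (Suc i) = cnt w r i" "cnt w p (Suc i) = cnt w p i + 1"
    using cnt_Suc[of i w] ij wi d by auto
  have c2: "cnt w q (Suc j) = cnt w q j" "cnt w r (Suc j) = cnt w r j + 1" "cnt w p (Suc j) = cnt w p j"
    using cnt_Suc[of j w] ij wj d by auto
  have c3: "cnt w p (Suc i) \<le> cnt w p j" "cnt w r (Suc i) \<le> cnt w r j"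
    using cnt_mono[of "Suc i" j w] ij by auto
  have n: "i \<le> length w" "Suc i \<le> length w" "j \<le> length w" "Suc j \<le> length w" using ij by auto
  note L = leadD[OF _ n(1)] leadD[OF _ n(2)] leadD[OF _ n(3)] leadD[OF _ n(4)]
  from O show False
    unfolding orient_def
  proof (elim disjE conjE)
    assume a: "lead w p q" "lead w q r" "lead w p r"
    show False using L[OF a(1)] L[OF a(2)] L[OF a(3)] c0 c1 c2 c3 by linarith
  next
    assume a: "lead w q r" "lead w r p" "lead w q p"
    show False using L[OF a(1)] L[OF a(2)] L[OF a(3)] c0 c1 c2 c3 by linarith
  next
    assume a: "lead w r p" "lead w p q" "lead w r q"
    show False using L[OF a(1)] L[OF a(2)] L[OF a(3)] c0 c1 c2 c3 by linarith
  qed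
qed


theorem part1:
  fixes V :: "'a set"
  assumes SG: "split_graph V Adj I K" and WR: "word_representable V Adj"
    and SI: "S \<subseteq> I" and deg: "\<forall>v\<in>S. degree V Adj v = d" and d2: "2 \<le> d"
    and inj: "inj_on (neighbourhood V Adj) S"
  shows "card S \<le> card K"
proof -
  obtain w where w: "set w = V" "\<forall>x\<in>V. \<forall>y\<in>V. x \<noteq> y \<longrightarrow> (alternate w x y \<longleftrightarrow> Adj x y)"
    using WR unfolding word_representable_def by blast
  have fin: "finite V" and sym: "\<And>x y. Adj x y \<Longrightarrow> Adj y x" and irr: "\<And>x. \<not> Adj x x"
    and inV: "\<And>x y. Adj x y \<Longrightarrow> x \<in> V \<and> y \<in> V"
    using SG unfolding split_graph_def simple_graph_def by auto
  have IK: "I \<inter> K = {}" "I \<union> K = V" using SG unfolding split_graph_def by auto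
  have cl: "\<And>x y. x \<in> K \<Longrightarrow> y \<in> K \<Longrightarrow> x \<noteq> y \<Longrightarrow> Adj x y"
    using SG unfolding split_graph_def maximal_clique_def is_clique_def by auto
  have ind: "\<And>x y. x \<in> I \<Longrightarrow> y \<in> I \<Longrightarrow> \<not> Adj x y"
    using SG unfolding split_graph_def independent_set_def by auto
  have KV: "K \<subseteq> V" using IK by auto
  have finK: "finite K" using fin KV finite_subset by auto
  have altA: "Adj x y \<longleftrightarrow> altl w x y" if "x \<in> V" "y \<in> V" "x \<noteq> y" for x y
    using w(2) that alternate_iff_lead unfolding altl_def by metis
  have sepA: "Adj x y \<longleftrightarrow> sepw w x y" if "x \<in> V" "y \<in> V" "x \<noteq> y" for x y
    using w(2) that alternate_iff_sepw by metis
  let ?N = "neighbourhood V Adj"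
  have NK: "?N v \<subseteq> K" if "v \<in> I" for v
    using that ind IK unfolding neighbourhood_def by auto
  have Nfin: "finite (?N v)" for v using fin unfolding neighbourhood_def by auto
  have Ncard: "card (?N v) = d" if "v \<in> S" for v using deg that unfolding degree_def by auto
  have Nne: "?N v \<noteq> {}" if "v \<in> S" for v using Ncard[OF that] d2 by auto
  have vV: "v \<in> V" if "v \<in> S" for v using that SI IK by auto
  have vnK: "v \<notin> K" if "v \<in> S" for v using that SI IK by auto
  have adjN: "Adj v a" if "a \<in> ?N v" for v a using that unfolding neighbourhood_def by auto

  have succ: "\<exists>a\<in>?N v. \<forall>x\<in>?N v - {a}. orient w v a x" if vS: "v \<in> S" for v
  proof -
    have NKv: "?N v \<subseteq> K" using NK vS SI by auto
    have tri: "orient w v a x \<or> orient w v x a" if "a \<in> ?N v" "x \<in> ?N v" "a \<noteq> x" for a x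
    proof -
      have "a \<in> K" "x \<in> K" using that NKv by auto
      then show ?thesis
        using orient_cases[of v a x w] that vnK[OF vS] adjN altA vV[OF vS] KV cl w(1)
        by (metis in_mono)
    qed
    have "v \<in> set w" using vV[OF vS] w(1) by simp
    then have "\<exists>i. i < length w \<and> w!i = v" by (simp add: in_set_conv_nth)
    define i0 where "i0 = (LEAST i. i < length w \<and> w!i = v)"
    have i0: "i0 < length w" "w!i0 = v"
      using LeastI_ex[OF \<open>\<exists>i. i < length w \<and> w!i = v\<close>] unfolding i0_def by auto
    have i0min: "i0 \<le> i" if "i < length w" "w!i = v" for i
      unfolding i0_def by (rule Least_le) (use that in simp)
    show ?thesis
    proof (cases "\<exists>j. i0 < j \<and> j < length w \<and> w!j \<in> ?N v")
      case True
      define j0 where "j0 = (LEAST j. i0 < j \<and> j < length w \<and> w!j \<in> ?N v)"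
      have j0: "i0 < j0" "j0 < length w" "w!j0 \<in> ?N v"
        using LeastI_ex[OF True] unfolding j0_def by auto
      have j0min: "j0 \<le> j" if "i0 < j" "j < length w" "w!j \<in> ?N v" for j
        unfolding j0_def by (rule Least_le) (use that in simp)
      show ?thesis
      proof (intro bexI[of _ "w!j0"] ballI)
        show "w!j0 \<in> ?N v" using j0 by simp
        fix x assume x: "x \<in> ?N v - {w!j0}"
        have vne: "v \<noteq> x" "v \<noteq> w!j0" using vnK[OF vS] x j0 NKv by auto
        show "orient w v (w!j0) x"
        proof (rule ccontr)
          assume "\<not> orient w v (w!j0) x"
          then have "orient w v x (w!j0)" using tri[of "w!j0" x] x j0 by auto
          then obtain k where "i0 < k" "k < j0" "w!k = x"
            using orient_between[of w v x "w!j0" i0 j0] vne x j0 i0 by auto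
          then show False using j0min[of k] x j0 by auto
        qed
      qed
    next
      case False
      obtain a0 where a0: "a0 \<in> ?N v" using Nne[OF vS] by blast
      then have "a0 \<in> set w" using NKv KV w(1) by auto
      then obtain j where "j < length w" "w!j = a0" by (auto simp: in_set_conv_nth)
      then have "\<exists>j. j < length w \<and> w!j \<in> ?N v" using a0 by blast
      define j0 where "j0 = (LEAST j. j < length w \<and> w!j \<in> ?N v)"
      have j0: "j0 < length w" "w!j0 \<in> ?N v"
        using LeastI_ex[OF \<open>\<exists>j. j < length w \<and> w!j \<in> ?N v\<close>] unfolding j0_def by auto
      have j0min: "j0 \<le> j" if "j < length w" "w!j \<in> ?N v" for j
        unfolding j0_def by (rule Least_le) (use that in simp)
      have vN: "v \<notin> ?N v" using irr unfolding neighbourhood_def by auto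
      have j0i0: "j0 < i0" using False j0 i0 vN by (metis linorder_neqE_nat)
      show ?thesis
      proof (intro bexI[of _ "w!j0"] ballI)
        show "w!j0 \<in> ?N v" using j0 by simp
        fix x assume x: "x \<in> ?N v - {w!j0}"
        have vne: "v \<noteq> x" "v \<noteq> w!j0" using vnK[OF vS] x j0 NKv by auto
        obtain jx where jx: "jx < length w" "w!jx = x"
          using x NKv KV w(1) by (metis DiffD1 in_mono in_set_conv_nth)
        have "j0 < jx" using j0min[of jx] jx x by (metis DiffD1 DiffD2 le_neq_implies_less singletonI)
        have "jx < i0" using False jx x i0 vne by (metis DiffD1 linorder_neqE_nat)
        show "orient w v (w!j0) x"
        proof (rule ccontr)
          assume "\<not> orient w v (w!j0) x"
          then have "orient w v x (w!j0)" using tri[of "w!j0" x] x j0 by auto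
          then have "orient w (w!j0) v x" by (rule orient_rot[OF orient_rot])
          then obtain k where "j0 < k" "k < jx" "w!k = v"
            using orient_between[of w "w!j0" v x j0 jx] vne x jx \<open>j0 < jx\<close> by auto
          then show False using i0min[of k] \<open>jx < i0\<close> jx by auto
        qed
      qed
    qed
  qed

  have key: "orient w a x z"
    if vS: "v \<in> S" and aN: "a \<in> ?N v" and sa: "\<forall>x\<in>?N v - {a}. orient w v a x"
      and xN: "x \<in> ?N v - {a}" and zK: "z \<in> K - ?N v" for v a x z
  proof -
    have NKv: "?N v \<subseteq> K" using NK vS SI by auto
    have K3: "a \<in> K" "x \<in> K" "z \<in> K" using aN xN zK NKv by auto
    have vK: "v \<notin> K" using vnK[OF vS] .
    have ne: "a \<noteq> x" "x \<noteq> z" "a \<noteq> z" "v \<noteq> a" "v \<noteq> x" "v \<noteq> z"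
      using xN zK aN vK K3 by blast+
    have vax: "orient w v a x" using sa xN by blast
    have V3: "a \<in> V" "x \<in> V" "z \<in> V" "v \<in> V" using K3 KV vV[OF vS] by auto
    have al1: "altl w a x" using altA[OF V3(1) V3(2) ne(1)] cl[OF K3(1) K3(2) ne(1)] by simp
    have al2: "altl w x z" using altA[OF V3(2) V3(3) ne(2)] cl[OF K3(2) K3(3) ne(2)] by simp
    have al3: "altl w a z" using altA[OF V3(1) V3(3) ne(3)] cl[OF K3(1) K3(3) ne(3)] by simp
    have "a \<in> set w" using V3 w(1) by simp
    then have cases: "orient w a x z \<or> orient w a z x"
      using orient_cases[OF ne(1) ne(2) ne(3) al1 al2 al3] by simp
    have "\<not> orient w a z x"
    proof
      assume azx: "orient w a z x"
      have s1: "sepw w z x" using sepA[OF V3(3) V3(2) ne(2)[symmetric]] cl[OF K3(3) K3(2) ne(2)[symmetric]] by simp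
      have s2: "sepw w v a" using sepA[OF V3(4) V3(1) ne(4)] adjN[OF aN] by simp
      have "sepw w v z"
        unfolding sepw_def
      proof (intro allI impI)
        fix i j assume ij: "i < j" "j < length w" "w!i = w!j" "w!i \<in> {v,z}"
        show "\<exists>k. i < k \<and> k < j \<and> w!k \<in> {v,z} \<and> w!k \<noteq> w!i"
        proof (cases "w!i = z")
          case True
          have wj: "w!j = z" using ij True by simp
          have S1: "\<And>i j. i < j \<Longrightarrow> j < length w \<Longrightarrow> w!i = w!j \<Longrightarrow> w!i \<in> {z,x} \<Longrightarrow>
              \<exists>k. i < k \<and> k < j \<and> w!k \<in> {z,x} \<and> w!k \<noteq> w!i"
            using s1 unfolding sepw_def by blast
          have "w!i \<in> {z,x}" using True by simp
          from S1[OF ij(1) ij(2) ij(3) this] obtain k1 where k1': "i < k1" "k1 < j" "w!k1 \<in> {z,x}" "w!k1 \<noteq> w!i"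
            by blast
          have k1: "i < k1" "k1 < j" "w!k1 = x" using k1' True by auto
          have "orient w x a z" using orient_rot[OF orient_rot[OF azx]] .
          from orient_between[OF this ne(1)[symmetric] ne(3) ne(2) k1(2) ij(2) k1(3) wj]
          obtain k2 where k2: "k1 < k2" "k2 < j" "w!k2 = a" by blast
          have "orient w x v a" using orient_rot[OF orient_rot[OF vax]] .
          from orient_between[OF this ne(5)[symmetric] ne(4) ne(1)[symmetric] k2(1) _ k1(3) k2(3)]
          obtain k3 where k3: "k1 < k3" "k3 < k2" "w!k3 = v" using k2(2) ij(2) by auto
          have "i < k3" "k3 < j" using k1 k2 k3 by auto
          moreover have "w!k3 \<in> {v,z}" "w!k3 \<noteq> w!i" using k3 True ne(6) by auto
          ultimately show ?thesis by blast
        next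
          case False
          then have wv: "w!i = v" "w!j = v" using ij by auto
          have S2: "\<And>i j. i < j \<Longrightarrow> j < length w \<Longrightarrow> w!i = w!j \<Longrightarrow> w!i \<in> {v,a} \<Longrightarrow>
              \<exists>k. i < k \<and> k < j \<and> w!k \<in> {v,a} \<and> w!k \<noteq> w!i"
            using s2 unfolding sepw_def by blast
          have "w!i \<in> {v,a}" using wv by simp
          from S2[OF ij(1) ij(2) ij(3) this] obtain k1 where k1': "i < k1" "k1 < j" "w!k1 \<in> {v,a}" "w!k1 \<noteq> w!i"
            by blast
          have k1: "i < k1" "k1 < j" "w!k1 = a" using k1' wv by auto
          have "orient w a x v" using orient_rot[OF vax] .
          from orient_between[OF this ne(1) ne(5)[symmetric] ne(4)[symmetric] k1(2) ij(2) k1(3) wv(2)]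
          obtain k2 where k2: "k1 < k2" "k2 < j" "w!k2 = x" by blast
          from orient_between[OF azx ne(3) ne(2)[symmetric] ne(1) k2(1) _ k1(3) k2(3)]
          obtain k3 where k3: "k1 < k3" "k3 < k2" "w!k3 = z" using k2(2) ij(2) by auto
          have "i < k3" "k3 < j" using k1 k2 k3 by auto
          moreover have "w!k3 \<in> {v,z}" "w!k3 \<noteq> w!i" using k3 wv ne(6) by auto
          ultimately show ?thesis by blast
        qed
      qed
      then have "Adj v z" using sepA[OF V3(4) V3(3) ne(6)] by simp
      then have "z \<in> ?N v" using V3 unfolding neighbourhood_def by simp
      then show False using zK by simp
    qed
    then show ?thesis using cases by blast
  qed

  define f where "f v = (SOME a. a \<in> ?N v \<and> (\<forall>x\<in>?N v - {a}. orient w v a x))" for v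
  have fprop: "f v \<in> ?N v \<and> (\<forall>x\<in>?N v - {f v}. orient w v (f v) x)" if "v \<in> S" for v
  proof -
    have "\<exists>a. a \<in> ?N v \<and> (\<forall>x\<in>?N v - {a}. orient w v a x)" using succ[OF that] by (simp add: Bex_def)
    then show ?thesis unfolding f_def by (rule someI_ex)
  qed
  have fK: "f ` S \<subseteq> K"
  proof (rule image_subsetI)
    fix v assume v: "v \<in> S"
    have "f v \<in> ?N v" using fprop[OF v] by simp
    moreover have "?N v \<subseteq> K" using NK v SI by auto
    ultimately show "f v \<in> K" by (rule subsetD[rotated])
  qed
  have "inj_on f S"
  proof (rule inj_onI)
    fix v1 v2 assume v: "v1 \<in> S" "v2 \<in> S" "f v1 = f v2"
    show "v1 = v2"
    proof (rule ccontr)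
      assume ne12: "v1 \<noteq> v2"
      have Nd: "?N v1 \<noteq> ?N v2"
      proof
        assume "?N v1 = ?N v2"
        then have "v1 = v2" using inj_onD[OF inj _ v(1) v(2)] by simp
        then show False using ne12 by simp
      qed
      have c: "card (?N v1) = card (?N v2)" using Ncard[OF v(1)] Ncard[OF v(2)] by simp
      have "\<not> ?N v1 \<subseteq> ?N v2"
      proof
        assume sub: "?N v1 \<subseteq> ?N v2"
        have "?N v1 = ?N v2" using card_subset_eq[OF Nfin sub c] .
        then show False using Nd by simp
      qed
      then obtain x where x: "x \<in> ?N v1" "x \<notin> ?N v2" by blast
      have "\<not> ?N v2 \<subseteq> ?N v1"
      proof
        assume sub: "?N v2 \<subseteq> ?N v1"
        have "?N v2 = ?N v1" using card_subset_eq[OF Nfin sub c[symmetric]] .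
        then show False using Nd by simp
      qed
      then obtain y where y: "y \<in> ?N v2" "y \<notin> ?N v1" by blast
      define a where "a = f v1"
      have a1: "a \<in> ?N v1" "\<forall>x\<in>?N v1 - {a}. orient w v1 a x" using fprop[OF v(1)] unfolding a_def by auto
      have a2: "a \<in> ?N v2" "\<forall>x\<in>?N v2 - {a}. orient w v2 a x" using fprop[OF v(2)] v(3) unfolding a_def by auto
      have xa: "x \<noteq> a" using x(2) a2(1) by blast
      have ya: "y \<noteq> a" using y(2) a1(1) by blast
      have NK1: "?N v1 \<subseteq> K" and NK2: "?N v2 \<subseteq> K" using NK v(1,2) SI by auto
      have K2: "x \<in> K" "y \<in> K" "a \<in> K" using x(1) y(1) a1(1) NK1 NK2 by auto
      have x1: "x \<in> ?N v1 - {a}" using x(1) xa by simp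
      have y1: "y \<in> K - ?N v1" using y(2) K2 by simp
      have y2: "y \<in> ?N v2 - {a}" using y(1) ya by simp
      have x2: "x \<in> K - ?N v2" using x(2) K2 by simp
      have o1: "orient w a x y" by (rule key[OF v(1) a1(1) a1(2) x1 y1])
      have o2: "orient w a y x" by (rule key[OF v(2) a2(1) a2(2) y2 x2])
      have xy: "x \<noteq> y" using x y by blast
      have sw: "a \<in> set w" "x \<in> set w" "y \<in> set w" using K2 KV w(1) by auto
      show False by (rule orient_excl[OF o1 o2 xa[symmetric] xy ya[symmetric] sw])
    qed
  qed
  then show ?thesis using card_inj_on_le[OF _ fK finK] by blast
qed


definition sepT :: "nat set \<Rightarrow> (nat \<Rightarrow> nat) \<Rightarrow> nat \<Rightarrow> nat \<Rightarrow> bool" where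
  "sepT E l x y \<longleftrightarrow> (\<forall>t1\<in>E. \<forall>t2\<in>E. t1 < t2 \<longrightarrow> l t1 = l t2 \<longrightarrow> l t1 \<in> {x,y} \<longrightarrow>
      (\<exists>t\<in>E. t1 < t \<and> t < t2 \<and> l t \<in> {x,y} \<and> l t \<noteq> l t1))"

lemma sepw_sorted:
  assumes fin: "finite E"
  shows "sepw (map l (sorted_list_of_set E)) x y \<longleftrightarrow> sepT E l x y"
proof -
  define xs where "xs = sorted_list_of_set E"
  have ss: "sorted_wrt (<) xs" unfolding xs_def by (simp add: strict_sorted_list_of_set)
  have st: "set xs = E" unfolding xs_def using fin by simp
  have lt: "xs!i < xs!j \<longleftrightarrow> i < j" if "i < length xs" "j < length xs" for i j
  proof
    assume "xs!i < xs!j"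
    then show "i < j" using sorted_wrt_nth_less[OF ss, of j i] that
      by (metis less_asym' linorder_neqE_nat)
  next
    assume "i < j" then show "xs!i < xs!j" using sorted_wrt_nth_less[OF ss] that by blast
  qed
  have mem: "t \<in> E \<longleftrightarrow> (\<exists>i<length xs. xs!i = t)" for t
    using st by (auto simp: in_set_conv_nth)
  show ?thesis
    unfolding sepw_def sepT_def xs_def[symmetric]
  proof (intro iffI ballI impI allI)
    fix t1 t2
    assume S: "\<forall>i j. i < j \<longrightarrow> j < length (map l xs) \<longrightarrow> map l xs ! i = map l xs ! j \<longrightarrow>
         map l xs ! i \<in> {x, y} \<longrightarrow> (\<exists>k>i. k < j \<and> map l xs ! k \<in> {x, y} \<and> map l xs ! k \<noteq> map l xs ! i)"
      and t: "t1 \<in> E" "t2 \<in> E" "t1 < t2" "l t1 = l t2" "l t1 \<in> {x, y}"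
    obtain i j where ij: "i < length xs" "xs!i = t1" "j < length xs" "xs!j = t2" using t mem by metis
    have "i < j" using lt ij t by metis
    have "\<exists>k>i. k < j \<and> map l xs ! k \<in> {x, y} \<and> map l xs ! k \<noteq> map l xs ! i"
    proof (rule S[rule_format])
      show "i < j" by fact
      show "j < length (map l xs)" using ij by simp
      show "map l xs ! i = map l xs ! j" using ij t by simp
      show "map l xs ! i \<in> {x, y}" using ij t by simp
    qed
    then obtain k where k0: "i < k" "k < j" "map l xs ! k \<in> {x,y}" "map l xs ! k \<noteq> map l xs ! i"
      by blast
    have k: "i < k" "k < j" "l (xs!k) \<in> {x,y}" "l (xs!k) \<noteq> l (xs!i)"
      using k0 ij by auto
    show "\<exists>t\<in>E. t1 < t \<and> t < t2 \<and> l t \<in> {x, y} \<and> l t \<noteq> l t1"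
      using k ij lt mem by (metis less_trans)
  next
    fix i j
    assume S: "\<forall>t1\<in>E. \<forall>t2\<in>E. t1 < t2 \<longrightarrow> l t1 = l t2 \<longrightarrow> l t1 \<in> {x, y} \<longrightarrow>
         (\<exists>t\<in>E. t1 < t \<and> t < t2 \<and> l t \<in> {x, y} \<and> l t \<noteq> l t1)"
      and ij: "i < j" "j < length (map l xs)" "map l xs ! i = map l xs ! j" "map l xs ! i \<in> {x, y}"
    have ij': "i < length xs" "j < length xs" using ij by auto
    have "xs!i \<in> E" using nth_mem[OF ij'(1)] st by simp
    moreover have "xs!j \<in> E" using nth_mem[OF ij'(2)] st by simp
    moreover have "xs!i < xs!j" using lt[OF ij'] ij(1) by simp
    ultimately have "xs!i \<in> E" "xs!j \<in> E" "xs!i < xs!j" by auto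
    then obtain t where t: "t \<in> E" "xs!i < t" "t < xs!j" "l t \<in> {x,y}" "l t \<noteq> l (xs!i)"
      using S ij ij' by auto
    obtain k where k: "k < length xs" "xs!k = t" using t mem by metis
    have "i < k" "k < j" using lt k t ij' by metis+
    then show "\<exists>k>i. k < j \<and> map l xs ! k \<in> {x, y} \<and> map l xs ! k \<noteq> map l xs ! i"
      using k t ij' by auto
  qed
qed

locale SC =
  fixes m d :: nat
  assumes m3: "3 \<le> m" and d2: "2 \<le> d" and dm: "2*d \<le> m+1"
begin

definition R :: nat where "R = 3*m+1"
definition enc :: "nat \<Rightarrow> nat \<Rightarrow> nat \<Rightarrow> nat" where "enc i a r = R*(a + i*m) + r"

lemma gap_less: "a < m \<Longrightarrow> b < m \<Longrightarrow> (a + i*m < b + j*m) \<longleftrightarrow> (i < j \<or> (i = j \<and> a < b))"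
proof -
  assume ab: "a < m" "b < m"
  have "a + i*m < b + j*m" if "i < j"
  proof -
    have "Suc i * m \<le> j * m" using that by (intro mult_le_mono1) simp
    then show ?thesis using ab by simp
  qed
  moreover have "\<not> a + i*m < b + j*m" if "j < i"
  proof -
    have "Suc j * m \<le> i * m" using that by (intro mult_le_mono1) simp
    then show ?thesis using ab by simp
  qed
  ultimately show ?thesis by (metis add_less_cancel_right linorder_neqE_nat)
qed

lemma lex_less: "r < R \<Longrightarrow> q < R \<Longrightarrow> (R*g + r < R*h + q) \<longleftrightarrow> (g < h \<or> (g = h \<and> r < q))"
proof -
  assume rq: "r < R" "q < R"
  have "R*g + r < R*h + q" if "g < h"
  proof -
    have "R * Suc g \<le> R * h" using that by (intro mult_le_mono2) simp
    then show ?thesis using rq by simp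
  qed
  moreover have "\<not> R*g + r < R*h + q" if "h < g"
  proof -
    have "R * Suc h \<le> R * g" using that by (intro mult_le_mono2) simp
    then show ?thesis using rq by simp
  qed
  ultimately show ?thesis by (metis add_less_cancel_left linorder_neqE_nat)
qed

lemma enc_less: "a < m \<Longrightarrow> b < m \<Longrightarrow> r < R \<Longrightarrow> q < R \<Longrightarrow>
   enc i a r < enc j b q \<longleftrightarrow> (i < j \<or> (i = j \<and> (a < b \<or> (a = b \<and> r < q))))"
  unfolding enc_def using lex_less gap_less by (metis nat_neq_iff)

definition lab :: "nat \<Rightarrow> nat" where
  "lab t = (if t mod R = 3*m then (t div R) mod m else m + (t mod R) mod m)"

lemma enc_alt: "enc i a r = r + (a + i*m) * R" unfolding enc_def by (simp add: mult.commute)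
lemma enc_mod: "r < R \<Longrightarrow> enc i a r mod R = r" unfolding enc_alt by simp
lemma enc_div: "r < R \<Longrightarrow> enc i a r div R = a + i*m" unfolding enc_alt by simp

lemma lab_enc: "a < m \<Longrightarrow> r < R \<Longrightarrow> lab (enc i a r) = (if r = 3*m then a else m + r mod m)"
  unfolding lab_def using enc_mod enc_div by simp

definition slot :: "nat \<Rightarrow> nat" where "slot s = (if s + d < m then m - d - 1 - s else s)"
definition cc :: "nat \<Rightarrow> nat" where "cc s = 2 * slot s"
definition al :: "nat \<Rightarrow> nat" where "al s = (if s + d < m then s else s + d - m)"
definition be :: "nat \<Rightarrow> nat" where "be s = (if s + d < m then s + d else s)"
definition cp :: "nat \<Rightarrow> nat" where "cp s = (if s + d < m then cc s else cc s + 1)"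
definition occV :: "nat \<Rightarrow> nat \<Rightarrow> nat \<Rightarrow> bool" where
  "occV s i a \<longleftrightarrow> (a = al s \<and> i \<le> cc s) \<or> (a = be s \<and> cp s \<le> i \<and> i < 2*m)"
definition rk :: "nat \<Rightarrow> nat \<Rightarrow> nat \<Rightarrow> nat" where
  "rk s i a = (if s + d < m then
      (if i = cc s \<and> a = al s then 2*m+s else if i = cc s \<and> a = be s then s else m+s)
    else (if i = cc s \<and> a = al s then s else if i = cc s + 1 \<and> a = be s then 2*m+s else m+s))"
definition Ev :: "nat set" where
  "Ev = {enc i z (3*m) | i z. i < 2*m \<and> z < m} \<union> {enc i a (rk s i a) | s i a. s < m \<and> occV s i a}"
definition inarc :: "nat \<Rightarrow> nat \<Rightarrow> bool" where
  "inarc s z \<longleftrightarrow> (if s + d < m then s \<le> z \<and> z < s + d else z < s + d - m \<or> s \<le> z)"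

lemma dm': "d < m" using m3 d2 dm by linarith

lemma al_lt: "s < m \<Longrightarrow> al s < m" unfolding al_def using dm' by auto
lemma be_lt: "s < m \<Longrightarrow> be s < m" unfolding be_def by auto
lemma slot_lt: "s < m \<Longrightarrow> slot s < m" unfolding slot_def by auto
lemma cc_lt: "s < m \<Longrightarrow> cc s + 1 < 2*m" unfolding cc_def using slot_lt by fastforce
lemma rk_cases: "rk s i a = s \<or> rk s i a = m + s \<or> rk s i a = 2*m+s" unfolding rk_def by auto
lemma rk_lt: "s < m \<Longrightarrow> rk s i a < 3*m" using rk_cases[of s i a] by auto
lemma rk_R: "s < m \<Longrightarrow> rk s i a < R" using rk_lt[of s i a] unfolding R_def by simp
lemma rk_mod: "s < m \<Longrightarrow> rk s i a mod m = s" using rk_cases[of s i a] by auto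
lemma R3: "3*m < R" unfolding R_def by simp

lemma occV_lt: "occV s i a \<Longrightarrow> s < m \<Longrightarrow> a < m \<and> i < 2*m"
  unfolding occV_def using al_lt be_lt cc_lt by fastforce

lemma lab_K: "z < m \<Longrightarrow> lab (enc i z (3*m)) = z" using lab_enc R3 by simp
lemma lab_V: "s < m \<Longrightarrow> a < m \<Longrightarrow> lab (enc i a (rk s i a)) = m + s"
  using lab_enc rk_R rk_lt rk_mod by (metis less_irrefl_nat)

lemma memK: "z < m \<Longrightarrow> (t \<in> Ev \<and> lab t = z) \<longleftrightarrow> (\<exists>i<2*m. t = enc i z (3*m))"
proof
  assume z: "z < m" and t: "t \<in> Ev \<and> lab t = z"
  show "\<exists>i<2*m. t = enc i z (3*m)"
  proof (cases "t \<in> {enc i z (3*m) | i z. i < 2*m \<and> z < m}")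
    case True
    then obtain i z' where "t = enc i z' (3*m)" "i < 2*m" "z' < m" by blast
    then show ?thesis using t lab_K by auto
  next
    case False
    then obtain s i a where "t = enc i a (rk s i a)" "s < m" "occV s i a" using t unfolding Ev_def by blast
    then show ?thesis using t z lab_V occV_lt by fastforce
  qed
next
  assume z: "z < m" and "\<exists>i<2*m. t = enc i z (3*m)"
  then obtain i where "i < 2*m" "t = enc i z (3*m)" by blast
  then show "t \<in> Ev \<and> lab t = z" using z lab_K unfolding Ev_def by blast
qed

lemma memV: "s < m \<Longrightarrow> (t \<in> Ev \<and> lab t = m + s) \<longleftrightarrow> (\<exists>i a. occV s i a \<and> t = enc i a (rk s i a))"
proof
  assume s: "s < m" and t: "t \<in> Ev \<and> lab t = m + s"
  show "\<exists>i a. occV s i a \<and> t = enc i a (rk s i a)"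
  proof (cases "t \<in> {enc i z (3*m) | i z. i < 2*m \<and> z < m}")
    case True
    then obtain i z' where "t = enc i z' (3*m)" "i < 2*m" "z' < m" by blast
    then show ?thesis using t lab_K by auto
  next
    case False
    then obtain s' i a where e: "t = enc i a (rk s' i a)" "s' < m" "occV s' i a" using t unfolding Ev_def by blast
    then have "s' = s" using t lab_V occV_lt by fastforce
    then show ?thesis using e by blast
  qed
next
  assume s: "s < m" and "\<exists>i a. occV s i a \<and> t = enc i a (rk s i a)"
  then obtain i a where "occV s i a" "t = enc i a (rk s i a)" by blast
  then show "t \<in> Ev \<and> lab t = m + s" using s lab_V occV_lt unfolding Ev_def by blast
qed

lemma lab_range: "t \<in> Ev \<Longrightarrow> lab t < 2*m"
  unfolding Ev_def using lab_K lab_V occV_lt by fastforce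

lemma Ev_fin: "finite Ev"
proof -
  have "Ev \<subseteq> {..< R * (2*m*m + m)}"
  proof
    fix t assume "t \<in> Ev"
    then consider (K) i z where "t = enc i z (3*m)" "i < 2*m" "z < m"
      | (V) s i a where "t = enc i a (rk s i a)" "s < m" "occV s i a" unfolding Ev_def by blast
    then show "t \<in> {..< R * (2*m*m + m)}"
    proof cases
      case K
      have "z + i*m < 2*m*m" using K gap_less[of z 0 i "2*m"] m3 by auto
      then have "z + i*m + 1 \<le> 2*m*m + m" by simp
      then have "R*(z + i*m + 1) \<le> R*(2*m*m+m)" by (rule mult_le_mono2)
      then show ?thesis using K R3 unfolding enc_def by (simp add: algebra_simps)
    next
      case V
      have o: "a < m" "i < 2*m" using occV_lt V by auto
      have "a + i*m < 0 + (2*m)*m" using o gap_less[of a 0 i "2*m"] m3 by auto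
      then have "a + i*m + 1 \<le> 2*m*m + m" by simp
      then have "R*(a + i*m + 1) \<le> R*(2*m*m+m)" by (rule mult_le_mono2)
      moreover have "rk s i a < R" using rk_R V by simp
      ultimately show ?thesis using V unfolding enc_def by (simp add: algebra_simps)
    qed
  qed
  then show ?thesis using finite_subset by blast
qed

end


context SC
begin

lemma A1:
  assumes s: "s < m" and z: "z < m" and arc: "inarc s z" and i1: "Suc i1 < 2*m"
  shows "\<exists>j a. occV s j a \<and> ((j = i1 \<and> z < a) \<or> (j = Suc i1 \<and> a \<le> z))"
proof (cases "s + d < m")
  case True
  then have ab: "al s = s" "be s = s + d" "cp s = cc s" unfolding al_def be_def cp_def by auto
  have zz: "s \<le> z" "z < s + d" using arc True unfolding inarc_def by auto
  show ?thesis
  proof (cases "Suc i1 \<le> cc s")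
    case True
    then show ?thesis using ab zz unfolding occV_def by (intro exI[of _ "Suc i1"] exI[of _ "al s"]) auto
  next
    case False
    then show ?thesis using ab zz i1 unfolding occV_def by (intro exI[of _ i1] exI[of _ "be s"]) auto
  qed
next
  case False
  then have ab: "al s = s + d - m" "be s = s" "cp s = cc s + 1" unfolding al_def be_def cp_def by auto
  have zz: "z < s + d - m \<or> s \<le> z" using arc False unfolding inarc_def by auto
  have alb: "s + d - m < s" using dm' s False by linarith
  show ?thesis
  proof (cases "s \<le> z")
    case True
    show ?thesis
    proof (cases "Suc i1 \<le> cc s")
      case T2: True
      then show ?thesis using ab True alb unfolding occV_def
        by (intro exI[of _ "Suc i1"] exI[of _ "al s"]) auto
    next
      case F2: False
      then show ?thesis using ab True i1 unfolding occV_def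
        by (intro exI[of _ "Suc i1"] exI[of _ "be s"]) auto
    qed
  next
    case False
    then have zl: "z < s + d - m" using zz by auto
    show ?thesis
    proof (cases "i1 \<le> cc s")
      case T2: True
      then show ?thesis using ab zl unfolding occV_def
        by (intro exI[of _ i1] exI[of _ "al s"]) auto
    next
      case F2: False
      then show ?thesis using ab zl alb i1 unfolding occV_def
        by (intro exI[of _ i1] exI[of _ "be s"]) auto
    qed
  qed
qed

lemma A2:
  assumes s: "s < m" and z: "z < m" and arc: "inarc s z" and o1: "occV s i1 a1" and o2: "occV s i2 a2"
    and lt: "i1 < i2 \<or> (i1 = i2 \<and> a1 < a2)"
  shows "\<exists>j<2*m. (i1 < j \<or> (j = i1 \<and> a1 \<le> z)) \<and> (j < i2 \<or> (j = i2 \<and> z < a2))"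
proof -
  have i2: "i2 < 2*m" using occV_lt[OF o2 s] by simp
  have alb: "\<not> s + d < m \<Longrightarrow> s + d - m < s" using dm' s by linarith
  show ?thesis
  proof (cases "a1 \<le> z")
    case True
    have "i1 < i2 \<or> (i1 = i2 \<and> z < a2)"
      using lt True o1 o2 arc alb unfolding occV_def al_def be_def cp_def inarc_def
      by (auto split: if_splits)
    then show ?thesis using True i2 by (intro exI[of _ i1]) auto
  next
    case False
    have "Suc i1 < i2 \<or> (Suc i1 = i2 \<and> z < a2)"
      using lt False o1 o2 arc alb unfolding occV_def al_def be_def cp_def inarc_def
      by (auto split: if_splits)
    then show ?thesis using i2 by (intro exI[of _ "Suc i1"]) auto
  qed
qed

definition cond :: "nat \<Rightarrow> nat \<Rightarrow> bool" where
  "cond u p \<longleftrightarrow> (if u + d < m then p \<le> al u \<or> be u \<le> p else al u \<le> p \<and> p \<le> be u)"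

lemma cond_main:
  assumes s: "s < m" and t: "t < m" and st: "slot s < slot t"
  shows "cond s (al t) \<or> cond t (be s)"
  using s t st dm d2 m3 unfolding cond_def slot_def al_def be_def
  by (auto split: if_splits)

lemma slot_inj: "s < m \<Longrightarrow> t < m \<Longrightarrow> slot s = slot t \<Longrightarrow> s = t"
  unfolding slot_def by (auto split: if_splits)

end


lemma sepT_sym: "sepT E l x y \<longleftrightarrow> sepT E l y x"
  unfolding sepT_def by (simp add: insert_commute)

context SC
begin

lemma R3': "3*m < R" using R3 .

lemma encK_less: "a < m \<Longrightarrow> b < m \<Longrightarrow>
   enc i a (3*m) < enc j b (3*m) \<longleftrightarrow> (i < j \<or> (i = j \<and> a < b))"
  using enc_less[of a b "3*m" "3*m" i j] R3 by auto

lemma betweenK: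
  assumes "Z < m" "Z' < m" "Z \<noteq> Z'" "i1 < i2" "i2 < 2*m"
  shows "\<exists>t\<in>Ev. enc i1 Z (3*m) < t \<and> t < enc i2 Z (3*m) \<and> lab t = Z'"
proof -
  define j where "j = (if Z < Z' then i1 else Suc i1)"
  have j: "j < 2*m" using assms unfolding j_def by auto
  have "enc j Z' (3*m) \<in> Ev \<and> lab (enc j Z' (3*m)) = Z'" using memK[of Z'] assms j by blast
  moreover have "enc i1 Z (3*m) < enc j Z' (3*m)" using encK_less assms unfolding j_def by auto
  moreover have "enc j Z' (3*m) < enc i2 Z (3*m)" using encK_less assms unfolding j_def by auto
  ultimately show ?thesis by blast
qed

lemma sep_KK: assumes "z1 < m" "z2 < m" "z1 \<noteq> z2" shows "sepT Ev lab z1 z2"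
  unfolding sepT_def
proof (intro ballI impI)
  fix t1 t2 assume t: "t1 \<in> Ev" "t2 \<in> Ev" "t1 < t2" "lab t1 = lab t2" "lab t1 \<in> {z1, z2}"
  obtain Z Z' where ZZ: "lab t1 = Z" "Z' \<in> {z1,z2}" "Z \<noteq> Z'" "Z < m" "Z' < m"
    using t(5) assms by (metis insert_iff singletonD)
  obtain i1 where i1: "i1 < 2*m" "t1 = enc i1 Z (3*m)" using memK[OF ZZ(4)] t ZZ by blast
  obtain i2 where i2: "i2 < 2*m" "t2 = enc i2 Z (3*m)" using memK[OF ZZ(4)] t ZZ by metis
  have "i1 < i2" using t(3) i1 i2 encK_less ZZ by auto
  then obtain u where "u \<in> Ev" "enc i1 Z (3*m) < u" "u < enc i2 Z (3*m)" "lab u = Z'"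
    using betweenK[of Z Z' i1 i2] ZZ i2 by blast
  then show "\<exists>t\<in>Ev. t1 < t \<and> t < t2 \<and> lab t \<in> {z1, z2} \<and> lab t \<noteq> lab t1"
    using i1 i2 ZZ by auto
qed

lemma encV_bounds: "s < m \<Longrightarrow> occV s i a \<Longrightarrow> a < m \<and> rk s i a < R \<and> rk s i a < 3*m"
  using occV_lt rk_R rk_lt by blast

lemma sep_arc: assumes s: "s < m" and z: "z < m" and arc: "inarc s z"
  shows "sepT Ev lab z (m+s)"
  unfolding sepT_def
proof (intro ballI impI)
  fix t1 t2 assume t: "t1 \<in> Ev" "t2 \<in> Ev" "t1 < t2" "lab t1 = lab t2" "lab t1 \<in> {z, m+s}"
  show "\<exists>t\<in>Ev. t1 < t \<and> t < t2 \<and> lab t \<in> {z, m+s} \<and> lab t \<noteq> lab t1"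
  proof (cases "lab t1 = z")
    case True
    obtain i1 where i1: "i1 < 2*m" "t1 = enc i1 z (3*m)" using memK[OF z] t True by blast
    obtain i2 where i2: "i2 < 2*m" "t2 = enc i2 z (3*m)" using memK[OF z] t True by metis
    have "i1 < i2" using t(3) i1 i2 encK_less z by auto
    then have "Suc i1 < 2*m" using i2 by simp
    then obtain j a where ja: "occV s j a" "(j = i1 \<and> z < a) \<or> (j = Suc i1 \<and> a \<le> z)"
      using A1[OF s z arc] by blast
    have b: "a < m" "rk s j a < R" "rk s j a < 3*m" using encV_bounds[OF s ja(1)] by auto
    have mem: "enc j a (rk s j a) \<in> Ev" "lab (enc j a (rk s j a)) = m + s" using memV[OF s] ja by blast+
    have "enc i1 z (3*m) < enc j a (rk s j a)"
      using enc_less[OF z b(1) R3 b(2)] ja by auto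
    moreover have "enc j a (rk s j a) < enc i2 z (3*m)"
      using enc_less[OF b(1) z b(2) R3] ja \<open>i1 < i2\<close> b(3) by auto
    ultimately show ?thesis using mem i1 i2 True z by (intro bexI[of _ "enc j a (rk s j a)"]) auto
  next
    case False
    then have L: "lab t1 = m + s" "lab t2 = m + s" using t by auto
    obtain i1 a1 where o1: "occV s i1 a1" "t1 = enc i1 a1 (rk s i1 a1)" using memV[OF s] t L by blast
    obtain i2 a2 where o2: "occV s i2 a2" "t2 = enc i2 a2 (rk s i2 a2)" using memV[OF s] t L by metis
    have b1: "a1 < m" "rk s i1 a1 < R" "rk s i1 a1 < 3*m" using encV_bounds[OF s o1(1)] by auto
    have b2: "a2 < m" "rk s i2 a2 < R" "rk s i2 a2 < 3*m" using encV_bounds[OF s o2(1)] by auto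
    have "i1 < i2 \<or> (i1 = i2 \<and> a1 < a2)"
      using t(3) o1 o2 enc_less[OF b1(1) b2(1) b1(2) b2(2)] by auto
    then obtain j where j: "j < 2*m" "i1 < j \<or> (j = i1 \<and> a1 \<le> z)" "j < i2 \<or> (j = i2 \<and> z < a2)"
      using A2[OF s z arc o1(1) o2(1)] by blast
    have mem: "enc j z (3*m) \<in> Ev" "lab (enc j z (3*m)) = z" using memK[OF z] j by blast+
    have "enc i1 a1 (rk s i1 a1) < enc j z (3*m)"
      using enc_less[OF b1(1) z b1(2) R3] j b1(3) by auto
    moreover have "enc j z (3*m) < enc i2 a2 (rk s i2 a2)"
      using enc_less[OF z b2(1) R3 b2(2)] j by auto
    ultimately show ?thesis using mem o1 o2 L z by (intro bexI[of _ "enc j z (3*m)"]) auto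
  qed
qed

end


context SC
begin

lemma al_ne_be: "s < m \<Longrightarrow> al s < be s"
  unfolding al_def be_def using dm' d2 by auto

lemma rk_steady: "i \<noteq> cc s \<Longrightarrow> i \<noteq> cc s + 1 \<Longrightarrow> rk s i a = m + s"
  unfolding rk_def by auto
lemma rk_low1: "s + d < m \<Longrightarrow> rk s (cc s) (al s) = 2*m + s" unfolding rk_def by simp
lemma rk_low2: "s < m \<Longrightarrow> s + d < m \<Longrightarrow> rk s (cc s) (be s) = s"
  using al_ne_be[of s] unfolding rk_def by auto
lemma rk_high1: "\<not> s + d < m \<Longrightarrow> rk s (cc s) (al s) = s" unfolding rk_def by simp
lemma rk_high2: "s < m \<Longrightarrow> \<not> s + d < m \<Longrightarrow> rk s (cc s + 1) (be s) = 2*m + s"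
  using al_ne_be[of s] unfolding rk_def by auto

lemma occ_low_al: "s < m \<Longrightarrow> s + d < m \<Longrightarrow> occV s (cc s) (al s)" unfolding occV_def by simp
lemma occ_low_be: "s < m \<Longrightarrow> s + d < m \<Longrightarrow> occV s (cc s) (be s)"
  unfolding occV_def cp_def using cc_lt[of s] by simp
lemma occ_high_al: "occV s (cc s) (al s)" unfolding occV_def by simp
lemma occ_high_be: "s < m \<Longrightarrow> \<not> s + d < m \<Longrightarrow> occV s (cc s + 1) (be s)"
  unfolding occV_def cp_def using cc_lt[of s] by simp

lemma cc_gap: "slot s < slot t \<Longrightarrow> cc s + 2 \<le> cc t" unfolding cc_def by simp

lemma occ_before: "cc s + 2 \<le> cc t \<Longrightarrow> i \<le> cc s + 1 \<Longrightarrow> occV t i a \<Longrightarrow> a = al t"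
  unfolding occV_def cp_def by (auto split: if_splits)
lemma occ_after: "cc s + 2 \<le> cc t \<Longrightarrow> cc t \<le> i \<Longrightarrow> occV s i a \<Longrightarrow> a = be s"
  unfolding occV_def cp_def by (auto split: if_splits)
lemma occ_al_ok: "i \<le> cc t \<Longrightarrow> occV t i (al t)" unfolding occV_def by simp
lemma occ_be_ok: "s < m \<Longrightarrow> cc s + 1 \<le> i \<Longrightarrow> i < 2*m \<Longrightarrow> occV s i (be s)"
  unfolding occV_def cp_def by auto
lemma occ_high_cases: "\<not> s + d < m \<Longrightarrow> occV s i a \<Longrightarrow> (a = al s \<and> i \<le> cc s) \<or> (a = be s \<and> cc s + 1 \<le> i)"
  unfolding occV_def cp_def by auto
lemma occ_low_cases: "s + d < m \<Longrightarrow> occV s i a \<Longrightarrow> (a = al s \<and> i \<le> cc s) \<or> (a = be s \<and> cc s \<le> i)"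
  unfolding occV_def cp_def by auto

lemma sepT_no:
  assumes "t1 \<in> Ev" "t2 \<in> Ev" "t1 < t2" "lab t1 = x" "lab t2 = x"
    and "\<And>u. u \<in> Ev \<Longrightarrow> t1 < u \<Longrightarrow> u < t2 \<Longrightarrow> lab u = y \<Longrightarrow> False" and "x \<noteq> y"
  shows "\<not> sepT Ev lab x y"
  using assms unfolding sepT_def by (metis insertE insertI1 singletonD)

lemma nonarc_low: assumes s: "s < m" and low: "s + d < m" and z: "z < m" and na: "\<not> inarc s z"
  shows "\<not> sepT Ev lab (m+s) z"
proof -
  have ab: "al s = s" "be s = s + d" using low unfolding al_def be_def by auto
  have nz: "\<not> (al s \<le> z \<and> z < be s)" using na low ab unfolding inarc_def by auto
  let ?t1 = "enc (cc s) (al s) (rk s (cc s) (al s))"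
  let ?t2 = "enc (cc s) (be s) (rk s (cc s) (be s))"
  have m1: "?t1 \<in> Ev" "lab ?t1 = m + s" using memV[OF s] occ_low_al[OF s low] by blast+
  have m2: "?t2 \<in> Ev" "lab ?t2 = m + s" using memV[OF s] occ_low_be[OF s low] by blast+
  have b: "al s < m" "be s < m" "rk s (cc s) (al s) < R" "rk s (cc s) (be s) < R"
    using al_lt be_lt rk_R s by auto
  have lt: "?t1 < ?t2" using enc_less[OF b] al_ne_be[OF s] by simp
  show ?thesis
  proof (rule sepT_no[OF m1(1) m2(1) lt m1(2) m2(2)])
    show "m + s \<noteq> z" using z by simp
    fix u assume u: "u \<in> Ev" "?t1 < u" "u < ?t2" "lab u = z"
    obtain j where j: "j < 2*m" "u = enc j z (3*m)" using memK[OF z] u by blast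
    have "?t1 < enc j z (3*m)" using u j by simp
    then have c1: "cc s < j \<or> (cc s = j \<and> al s \<le> z)"
      using enc_less[OF b(1) z b(3) R3] rk_low1[OF low] s by auto
    have "enc j z (3*m) < ?t2" using u j by simp
    then have c2: "j < cc s \<or> (j = cc s \<and> z < be s)"
      using enc_less[OF z b(2) R3 b(4)] rk_low2[OF s low] s by auto
    show False using c1 c2 nz by auto
  qed
qed

lemma nonarc_high: assumes s: "s < m" and high: "\<not> s + d < m" and z: "z < m" and na: "\<not> inarc s z"
  shows "\<not> sepT Ev lab z (m+s)"
proof -
  have ab: "al s = s + d - m" "be s = s" using high unfolding al_def be_def by auto
  have zz: "al s \<le> z" "z < be s" using na high ab unfolding inarc_def by auto
  let ?t1 = "enc (cc s) z (3*m)"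
  let ?t2 = "enc (cc s + 1) z (3*m)"
  have cl: "cc s + 1 < 2*m" using cc_lt[OF s] .
  have "\<exists>i<2*m. ?t1 = enc i z (3*m)" using cl by (intro exI[of _ "cc s"]) auto
  then have m1: "?t1 \<in> Ev" "lab ?t1 = z" using memK[OF z, of ?t1] by blast+
  have "\<exists>i<2*m. ?t2 = enc i z (3*m)" using cl by (intro exI[of _ "cc s + 1"]) auto
  then have m2: "?t2 \<in> Ev" "lab ?t2 = z" using memK[OF z, of ?t2] by blast+
  have lt: "?t1 < ?t2" using encK_less[OF z z] by simp
  show ?thesis
  proof (rule sepT_no[OF m1(1) m2(1) lt m1(2) m2(2)])
    show "z \<noteq> m + s" using z by simp
    fix u assume u: "u \<in> Ev" "?t1 < u" "u < ?t2" "lab u = m + s"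
    obtain j a where o: "occV s j a" "u = enc j a (rk s j a)" using memV[OF s] u by blast
    have b: "a < m" "rk s j a < R" "rk s j a < 3*m" using encV_bounds[OF s o(1)] by auto
    have c1: "cc s < j \<or> (cc s = j \<and> z < a)"
      using u(2) o(2) enc_less[OF z b(1) R3 b(2)] b(3) by auto
    have c2: "j < cc s + 1 \<or> (j = cc s + 1 \<and> a \<le> z)"
      using u(3) o(2) enc_less[OF b(1) z b(2) R3] b(3) by auto
    show False using occ_high_cases[OF high o(1)] c1 c2 zz by auto
  qed
qed

end


context SC
begin

lemma VV_s:
  assumes s: "s < m" and t: "t < m" and st: "slot s < slot t" and cd: "cond s (al t)"
  shows "\<not> sepT Ev lab (m+s) (m+t)"
proof -
  have gap: "cc s + 2 \<le> cc t" using cc_gap[OF st] .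
  have ts: "t \<noteq> s" using st by auto
  have bs: "al s < m" "be s < m" "al t < m" "be t < m" using al_lt be_lt s t by auto
  show ?thesis
  proof (cases "s + d < m")
    case low: True
    have cd': "al t \<le> al s \<or> be s \<le> al t" using cd low unfolding cond_def by simp
    let ?t1 = "enc (cc s) (al s) (rk s (cc s) (al s))"
    let ?t2 = "enc (cc s) (be s) (rk s (cc s) (be s))"
    have m1: "?t1 \<in> Ev" "lab ?t1 = m + s" using memV[OF s] occ_low_al[OF s low] by blast+
    have m2: "?t2 \<in> Ev" "lab ?t2 = m + s" using memV[OF s] occ_low_be[OF s low] by blast+
    have b: "rk s (cc s) (al s) < R" "rk s (cc s) (be s) < R" using rk_R s by auto
    have lt: "?t1 < ?t2" using enc_less[OF bs(1) bs(2) b] al_ne_be[OF s] by simp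
    show ?thesis
    proof (rule sepT_no[OF m1(1) m2(1) lt m1(2) m2(2)])
      show "m + s \<noteq> m + t" using ts by simp
      fix u assume u: "u \<in> Ev" "?t1 < u" "u < ?t2" "lab u = m + t"
      obtain j a where o: "occV t j a" "u = enc j a (rk t j a)" using memV[OF t] u by blast
      have bb: "a < m" "rk t j a < R" using encV_bounds[OF t o(1)] by auto
      have c1: "cc s < j \<or> (cc s = j \<and> (al s < a \<or> (al s = a \<and> 2*m+s < rk t j a)))"
        using u(2) o(2) enc_less[OF bs(1) bb(1) b(1) bb(2)] rk_low1[OF low] by auto
      have c2: "j < cc s \<or> (j = cc s \<and> (a < be s \<or> (a = be s \<and> rk t j a < s)))"
        using u(3) o(2) enc_less[OF bb(1) bs(2) bb(2) b(2)] rk_low2[OF s low] by auto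
      have jj: "j = cc s" using c1 c2 by auto
      have rr: "rk t j a = m + t" using rk_steady gap jj by auto
      have aa: "a = al t" using occ_before[OF gap _ o(1)] jj by simp
      show False using c1 c2 jj rr aa cd' s t by auto
    qed
  next
    case high: False
    have cd': "al s \<le> al t \<and> al t \<le> be s" using cd high unfolding cond_def by simp
    let ?t1 = "enc (cc s) (al t) (rk t (cc s) (al t))"
    let ?t2 = "enc (cc s + 1) (al t) (rk t (cc s + 1) (al t))"
    have r1: "rk t (cc s) (al t) = m + t" "rk t (cc s + 1) (al t) = m + t"
      using rk_steady gap by auto
    have m1: "?t1 \<in> Ev" "lab ?t1 = m + t" using memV[OF t] occ_al_ok[of "cc s" t] gap by auto
    have m2: "?t2 \<in> Ev" "lab ?t2 = m + t" using memV[OF t] occ_al_ok[of "cc s + 1" t] gap by auto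
    have b: "rk t (cc s) (al t) < R" "rk t (cc s + 1) (al t) < R" using rk_R t by auto
    have lt: "?t1 < ?t2" using enc_less[OF bs(3) bs(3) b] by simp
    show ?thesis
      unfolding sepT_sym[of _ _ "m+s"]
    proof (rule sepT_no[OF m1(1) m2(1) lt m1(2) m2(2)])
      show "m + t \<noteq> m + s" using ts by simp
      fix u assume u: "u \<in> Ev" "?t1 < u" "u < ?t2" "lab u = m + s"
      obtain j a where o: "occV s j a" "u = enc j a (rk s j a)" using memV[OF s] u by blast
      have bb: "a < m" "rk s j a < R" using encV_bounds[OF s o(1)] by auto
      have c1: "cc s < j \<or> (cc s = j \<and> (al t < a \<or> (al t = a \<and> m+t < rk s j a)))"
        using u(2) o(2) enc_less[OF bs(3) bb(1) b(1) bb(2)] r1 by auto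
      have c2: "j < cc s + 1 \<or> (j = cc s + 1 \<and> (a < al t \<or> (a = al t \<and> rk s j a < m + t)))"
        using u(3) o(2) enc_less[OF bb(1) bs(3) bb(2) b(2)] r1 by auto
      have jj: "j = cc s \<or> j = cc s + 1" using c1 c2 by auto
      then show False
      proof
        assume j: "j = cc s"
        then have "a = al s" using occ_high_cases[OF high o(1)] by auto
        then have "rk s j a = s" using rk_high1[OF high] j by simp
        then show False using c1 j \<open>a = al s\<close> cd' s by auto
      next
        assume j: "j = cc s + 1"
        then have "a = be s" using occ_high_cases[OF high o(1)] by auto
        then have "rk s j a = 2*m + s" using rk_high2[OF s high] j by simp
        then show False using c2 j \<open>a = be s\<close> cd' t by auto
      qed
    qed
  qed
qed

lemma VV_t:
  assumes s: "s < m" and t: "t < m" and st: "slot s < slot t" and cd: "cond t (be s)"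
  shows "\<not> sepT Ev lab (m+s) (m+t)"
proof -
  have gap: "cc s + 2 \<le> cc t" using cc_gap[OF st] .
  have ts: "t \<noteq> s" using st by auto
  have bs: "al s < m" "be s < m" "al t < m" "be t < m" using al_lt be_lt s t by auto
  have cl: "cc t + 1 < 2*m" using cc_lt[OF t] .
  show ?thesis
  proof (cases "t + d < m")
    case low: True
    have cd': "be s \<le> al t \<or> be t \<le> be s" using cd low unfolding cond_def by simp
    let ?t1 = "enc (cc t) (al t) (rk t (cc t) (al t))"
    let ?t2 = "enc (cc t) (be t) (rk t (cc t) (be t))"
    have m1: "?t1 \<in> Ev" "lab ?t1 = m + t" using memV[OF t] occ_low_al[OF t low] by blast+
    have m2: "?t2 \<in> Ev" "lab ?t2 = m + t" using memV[OF t] occ_low_be[OF t low] by blast+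
    have b: "rk t (cc t) (al t) < R" "rk t (cc t) (be t) < R" using rk_R t by auto
    have lt: "?t1 < ?t2" using enc_less[OF bs(3) bs(4) b] al_ne_be[OF t] by simp
    show ?thesis
      unfolding sepT_sym[of _ _ "m+s"]
    proof (rule sepT_no[OF m1(1) m2(1) lt m1(2) m2(2)])
      show "m + t \<noteq> m + s" using ts by simp
      fix u assume u: "u \<in> Ev" "?t1 < u" "u < ?t2" "lab u = m + s"
      obtain j a where o: "occV s j a" "u = enc j a (rk s j a)" using memV[OF s] u by blast
      have bb: "a < m" "rk s j a < R" using encV_bounds[OF s o(1)] by auto
      have c1: "cc t < j \<or> (cc t = j \<and> (al t < a \<or> (al t = a \<and> 2*m+t < rk s j a)))"
        using u(2) o(2) enc_less[OF bs(3) bb(1) b(1) bb(2)] rk_low1[OF low] by auto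
      have c2: "j < cc t \<or> (j = cc t \<and> (a < be t \<or> (a = be t \<and> rk s j a < t)))"
        using u(3) o(2) enc_less[OF bb(1) bs(4) bb(2) b(2)] rk_low2[OF t low] by auto
      have jj: "j = cc t" using c1 c2 by auto
      have rr: "rk s j a = m + s" using rk_steady gap jj by auto
      have aa: "a = be s" using occ_after[OF gap _ o(1)] jj by simp
      show False using c1 c2 jj rr aa cd' s t by auto
    qed
  next
    case high: False
    have cd': "al t \<le> be s \<and> be s \<le> be t" using cd high unfolding cond_def by simp
    let ?t1 = "enc (cc t) (be s) (rk s (cc t) (be s))"
    let ?t2 = "enc (cc t + 1) (be s) (rk s (cc t + 1) (be s))"
    have r1: "rk s (cc t) (be s) = m + s" "rk s (cc t + 1) (be s) = m + s"
      using rk_steady gap by auto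
    have m1: "?t1 \<in> Ev" "lab ?t1 = m + s" using memV[OF s] occ_be_ok[OF s, of "cc t"] gap cl by auto
    have m2: "?t2 \<in> Ev" "lab ?t2 = m + s" using memV[OF s] occ_be_ok[OF s, of "cc t + 1"] gap cl by auto
    have b: "rk s (cc t) (be s) < R" "rk s (cc t + 1) (be s) < R" using rk_R s by auto
    have lt: "?t1 < ?t2" using enc_less[OF bs(2) bs(2) b] by simp
    show ?thesis
    proof (rule sepT_no[OF m1(1) m2(1) lt m1(2) m2(2)])
      show "m + s \<noteq> m + t" using ts by simp
      fix u assume u: "u \<in> Ev" "?t1 < u" "u < ?t2" "lab u = m + t"
      obtain j a where o: "occV t j a" "u = enc j a (rk t j a)" using memV[OF t] u by blast
      have bb: "a < m" "rk t j a < R" using encV_bounds[OF t o(1)] by auto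
      have c1: "cc t < j \<or> (cc t = j \<and> (be s < a \<or> (be s = a \<and> m+s < rk t j a)))"
        using u(2) o(2) enc_less[OF bs(2) bb(1) b(1) bb(2)] r1 by auto
      have c2: "j < cc t + 1 \<or> (j = cc t + 1 \<and> (a < be s \<or> (a = be s \<and> rk t j a < m + s)))"
        using u(3) o(2) enc_less[OF bb(1) bs(2) bb(2) b(2)] r1 by auto
      have jj: "j = cc t \<or> j = cc t + 1" using c1 c2 by auto
      then show False
      proof
        assume j: "j = cc t"
        then have "a = al t" using occ_high_cases[OF high o(1)] by auto
        then have "rk t j a = t" using rk_high1[OF high] j by simp
        then show False using c1 j \<open>a = al t\<close> cd' t by auto
      next
        assume j: "j = cc t + 1"
        then have "a = be t" using occ_high_cases[OF high o(1)] by auto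
        then have "rk t j a = 2*m + t" using rk_high2[OF t high] j by simp
        then show False using c2 j \<open>a = be t\<close> cd' s by auto
      qed
    qed
  qed
qed

lemma VV:
  assumes s: "s < m" and t: "t < m" and st: "s \<noteq> t"
  shows "\<not> sepT Ev lab (m+s) (m+t)"
proof -
  have "slot s \<noteq> slot t" using slot_inj s t st by blast
  then consider "slot s < slot t" | "slot t < slot s" by linarith
  then show ?thesis
  proof cases
    case 1
    then show ?thesis using cond_main[OF s t 1] VV_s[OF s t 1] VV_t[OF s t 1] by blast
  next
    case 2
    then show ?thesis using cond_main[OF t s 2] VV_s[OF t s 2] VV_t[OF t s 2] sepT_sym by blast
  qed
qed

end


context SC
begin

definition Vc :: "nat set" where "Vc = {..<2*m}"
definition Kc :: "nat set" where "Kc = {..<m}"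
definition Ic :: "nat set" where "Ic = {m..<2*m}"
definition AdjC :: "nat \<Rightarrow> nat \<Rightarrow> bool" where
  "AdjC x y \<longleftrightarrow> x < 2*m \<and> y < 2*m \<and> x \<noteq> y \<and>
     ((x < m \<and> y < m) \<or> (x < m \<and> m \<le> y \<and> inarc (y - m) x) \<or> (y < m \<and> m \<le> x \<and> inarc (x - m) y))"
definition wc :: "nat list" where "wc = map lab (sorted_list_of_set Ev)"

lemma alt_wc_sep: "x \<noteq> y \<Longrightarrow> alternate wc x y \<longleftrightarrow> sepT Ev lab x y"
  unfolding wc_def using alternate_iff_sepw sepw_sorted[OF Ev_fin] by metis

lemma alt_wc: assumes "x < 2*m" "y < 2*m" "x \<noteq> y" shows "alternate wc x y \<longleftrightarrow> AdjC x y"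
proof -
  have main: "sepT Ev lab x y \<longleftrightarrow> AdjC x y" if xy: "x < 2*m" "y < 2*m" "x \<noteq> y" "x < m" for x y
  proof (cases "y < m")
    case True
    then show ?thesis using sep_KK xy unfolding AdjC_def by auto
  next
    case False
    define s where "s = y - m"
    have y: "y = m + s" "s < m" using False xy unfolding s_def by auto
    show ?thesis
    proof (cases "inarc s x")
      case True
      then show ?thesis using sep_arc[OF y(2) xy(4) True] xy y unfolding AdjC_def by auto
    next
      case na: False
      have "\<not> sepT Ev lab x y"
      proof (cases "s + d < m")
        case True
        then show ?thesis using nonarc_low[OF y(2) True xy(4) na] sepT_sym y by metis
      next
        case False
        then show ?thesis using nonarc_high[OF y(2) False xy(4) na] y by metis
      qed
      then show ?thesis using na xy y unfolding AdjC_def by auto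
    qed
  qed
  have symA: "AdjC x y \<longleftrightarrow> AdjC y x" for x y unfolding AdjC_def by auto
  have "sepT Ev lab x y \<longleftrightarrow> AdjC x y"
  proof (cases "x < m")
    case True
    then show ?thesis using main assms by blast
  next
    case F1: False
    show ?thesis
    proof (cases "y < m")
      case True
      then show ?thesis using main[of y x] assms sepT_sym symA by metis
    next
      case False
      define s where "s = x - m"
      define t where "t = y - m"
      have st: "x = m + s" "y = m + t" "s < m" "t < m" "s \<noteq> t" using F1 False assms
        unfolding s_def t_def by auto
      have "\<not> sepT Ev lab x y" using VV[OF st(3) st(4) st(5)] st by simp
      moreover have "\<not> AdjC x y" using F1 False unfolding AdjC_def by auto
      ultimately show ?thesis by simp
    qed
  qed
  then show ?thesis using alt_wc_sep assms(3) by simp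
qed

lemma set_wc: "set wc = Vc"
proof -
  have "set wc = lab ` Ev" unfolding wc_def using Ev_fin by simp
  also have "\<dots> = Vc"
  proof
    show "lab ` Ev \<subseteq> Vc" using lab_range unfolding Vc_def by auto
    show "Vc \<subseteq> lab ` Ev"
    proof
      fix x assume "x \<in> Vc"
      then have x: "x < 2*m" unfolding Vc_def by simp
      show "x \<in> lab ` Ev"
      proof (cases "x < m")
        case True
        have "\<exists>i<2*m. enc 0 x (3*m) = enc i x (3*m)" using m3 by (intro exI[of _ 0]) auto
        then have "enc 0 x (3*m) \<in> Ev \<and> lab (enc 0 x (3*m)) = x" using memK[OF True] by blast
        then show ?thesis by (metis image_eqI)
      next
        case False
        define s where "s = x - m"
        have s: "s < m" "x = m + s" using x False unfolding s_def by auto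
        have "occV s 0 (al s)" unfolding occV_def by simp
        then have "enc 0 (al s) (rk s 0 (al s)) \<in> Ev \<and> lab (enc 0 (al s) (rk s 0 (al s))) = m + s"
          using memV[OF s(1)] by blast
        then show ?thesis using s by (metis image_eqI)
      qed
    qed
  qed
  finally show ?thesis .
qed

lemma nbh: assumes s: "s < m" shows "neighbourhood Vc AdjC (m+s) = {z. z < m \<and> inarc s z}"
  unfolding neighbourhood_def Vc_def AdjC_def using s by auto

lemma card_arc: assumes s: "s < m" shows "card {z. z < m \<and> inarc s z} = d"
proof (cases "s + d < m")
  case True
  have "{z. z < m \<and> inarc s z} = {s..<s+d}" using True unfolding inarc_def by auto
  then show ?thesis by simp
next
  case False
  have "{z. z < m \<and> inarc s z} = {..<s+d-m} \<union> {s..<m}" using False s dm' unfolding inarc_def by auto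
  moreover have "{..<s+d-m} \<inter> {s..<m} = {}" using dm' by auto
  ultimately have "card {z. z < m \<and> inarc s z} = (s+d-m) + (m - s)"
    by (simp add: card_Un_disjoint)
  then show ?thesis using False s by simp
qed

lemma arc_inj: assumes s: "s < m" and t: "t < m" and st: "s < t"
  shows "\<exists>z<m. inarc s z \<noteq> inarc t z"
proof (cases "s + d < m")
  case sl: True
  show ?thesis
  proof (cases "t + d < m")
    case True
    then show ?thesis using sl st s d2 unfolding inarc_def by (intro exI[of _ s]) auto
  next
    case False
    then show ?thesis using sl st t unfolding inarc_def by (intro exI[of _ "m - 1"]) auto
  qed
next
  case sh: False
  then have th: "\<not> t + d < m" using st by simp
  then show ?thesis using sh st t dm' unfolding inarc_def by (intro exI[of _ "t - 1"]) auto
qed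

lemma part2: "\<exists>(V :: nat set) Adj I K S.
               split_graph V Adj I K \<and> word_representable V Adj \<and> card K = m \<and>
               S \<subseteq> I \<and> card S = m \<and> (\<forall>v\<in>S. degree V Adj v = d) \<and>
               inj_on (neighbourhood V Adj) S"
proof (intro exI conjI)
  show "split_graph Vc AdjC Ic Kc"
    unfolding split_graph_def
  proof (intro conjI)
    show "simple_graph Vc AdjC" unfolding simple_graph_def Vc_def AdjC_def by auto
    show "Ic \<inter> Kc = {}" unfolding Ic_def Kc_def by auto
    show "Ic \<union> Kc = Vc" unfolding Ic_def Kc_def Vc_def by auto
    show "independent_set AdjC Ic" unfolding independent_set_def Ic_def AdjC_def by auto
    show "maximal_clique Vc AdjC Kc"
      unfolding maximal_clique_def
    proof (intro conjI ballI)
      show "Kc \<subseteq> Vc" unfolding Kc_def Vc_def by auto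
      show "is_clique AdjC Kc" unfolding is_clique_def Kc_def AdjC_def by auto
      fix v assume v: "v \<in> Vc - Kc"
      define s where "s = v - m"
      have s: "s < m" "v = m + s" using v unfolding s_def Vc_def Kc_def by auto
      define z where "z = (if s + d < m then s + d else s + d - m)"
      have z: "z < m" "\<not> inarc s z" using s dm' unfolding z_def inarc_def by auto
      have "\<not> AdjC v z" using z s unfolding AdjC_def by auto
      moreover have "z \<in> insert v Kc" "v \<in> insert v Kc" "v \<noteq> z" using z s unfolding Kc_def by auto
      ultimately show "\<not> is_clique AdjC (insert v Kc)" unfolding is_clique_def by blast
    qed
  qed
  show "word_representable Vc AdjC"
    unfolding word_representable_def
    using set_wc alt_wc unfolding Vc_def by (intro exI[of _ wc]) auto
  show "card Kc = m" unfolding Kc_def by simp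
  show "Ic \<subseteq> Ic" by simp
  show "card Ic = m" unfolding Ic_def by simp
  show "\<forall>v\<in>Ic. degree Vc AdjC v = d"
  proof
    fix v assume "v \<in> Ic"
    then obtain s where s: "s < m" "v = m + s" unfolding Ic_def by (metis atLeastLessThan_iff le_add_diff_inverse mult_2 nat_add_left_cancel_less)
    show "degree Vc AdjC v = d" unfolding degree_def using nbh[OF s(1)] card_arc[OF s(1)] s by simp
  qed
  show "inj_on (neighbourhood Vc AdjC) Ic"
  proof (rule inj_onI)
    fix x y assume xy: "x \<in> Ic" "y \<in> Ic" "neighbourhood Vc AdjC x = neighbourhood Vc AdjC y"
    define s where "s = x - m"
    define t where "t = y - m"
    have st: "s < m" "t < m" "x = m + s" "y = m + t" using xy unfolding s_def t_def Ic_def by auto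
    have eq: "{z. z < m \<and> inarc s z} = {z. z < m \<and> inarc t z}" using xy(3) nbh st by metis
    have "s = t"
    proof (rule ccontr)
      assume "s \<noteq> t"
      then consider "s < t" | "t < s" by linarith
      then show False
      proof cases
        case 1
        then obtain z where "z < m" "inarc s z \<noteq> inarc t z" using arc_inj st by blast
        then show False using eq by blast
      next
        case 2
        then obtain z where "z < m" "inarc t z \<noteq> inarc s z" using arc_inj st by blast
        then show False using eq by blast
      qed
    qed
    then show "x = y" using st by simp
  qed
qed

end


theorem theorem12:
  shows "(\<forall>(V :: 'a set) Adj I K d S.
            split_graph V Adj I K \<and> word_representable V Adj \<and> card K \<ge> 3 \<and>
            2 \<le> d \<and> 2 * d \<le> card K + 1 \<and>
            S \<subseteq> I \<and> (\<forall>v\<in>S. degree V Adj v = d) \<and>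
            inj_on (neighbourhood V Adj) S
            \<longrightarrow> card S \<le> card K)
       \<and> (\<forall>m d :: nat. m \<ge> 3 \<and> 2 \<le> d \<and> 2 * d \<le> m + 1 \<longrightarrow>
            (\<exists>(V :: nat set) Adj I K S.
               split_graph V Adj I K \<and> word_representable V Adj \<and> card K = m \<and>
               S \<subseteq> I \<and> card S = m \<and> (\<forall>v\<in>S. degree V Adj v = d) \<and>
               inj_on (neighbourhood V Adj) S))"
  apply (rule conjI)
   apply (intro allI impI)
   apply (elim conjE)
   apply (rule part1)
        apply assumption+
  apply (intro allI impI)
  apply (elim conjE)
  apply (rule SC.part2)
  apply (simp add: SC_def)
  done

end
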